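(* Every relation that is a delta matroid and belongs to IM-conj is basically binary.
   Context: A relation $R\subseteq\{0,1\}^V$ is a delta matroid if for all $x,y\in R$ and all $i$ with $x_i\ne y_i$ there exists $j$ with $x_j\ne y_j$ (possibly $j=i$) such that the configuration obtained from $x$ by flipping coordinates $i$ and $j$ lies in $R$. IM-conj is the class of relations expressible as a conjunction of implications $x_i\le x_j$ and pins $x_i=c$ ($c\in\{0,1\}$). A relation is basically binary if it is equivalent (up to renaming variables) to a Cartesian product of relations of arity at most two. *)

theory Defs
  imports Main "HOL-Library.Disjoint_Sets"
begin

text \<open>Assignments over a finite variable set V: Boolean-valued functions,
  extensional (False outside V). A relation over V is a subset of these.\<close>
definition assignments :: "'v set \<Rightarrow> ('v \<Rightarrow> bool) set" where
  "assignments V = {x. \<forall>v. v \<notin> V \<longrightarrow> x v = False}"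

definition flip2 :: "('v \<Rightarrow> bool) \<Rightarrow> 'v \<Rightarrow> 'v \<Rightarrow> ('v \<Rightarrow> bool)" where
  "flip2 x i j = (\<lambda>v. if v = i \<or> v = j then \<not> x v else x v)"

definition delta_matroid :: "'v set \<Rightarrow> ('v \<Rightarrow> bool) set \<Rightarrow> bool" where
  "delta_matroid V R \<longleftrightarrow>
     (\<forall>x\<in>R. \<forall>y\<in>R. \<forall>i\<in>V. x i \<noteq> y i \<longrightarrow>
        (\<exists>j\<in>V. x j \<noteq> y j \<and> flip2 x i j \<in> R))"

definition IM_conj :: "'v set \<Rightarrow> ('v \<Rightarrow> bool) set \<Rightarrow> bool" where
  "IM_conj V R \<longleftrightarrow>
     (\<exists>Imp Pins. Imp \<subseteq> V \<times> V \<and> Pins \<subseteq> V \<times> (UNIV :: bool set) \<and>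
        R = {x \<in> assignments V. (\<forall>(i, j)\<in>Imp. x i \<longrightarrow> x j) \<and> (\<forall>(i, c)\<in>Pins. x i = c)})"

definition restrict_to :: "('v \<Rightarrow> bool) \<Rightarrow> 'v set \<Rightarrow> ('v \<Rightarrow> bool)" where
  "restrict_to x B = (\<lambda>v. if v \<in> B then x v else False)"

text \<open>Basically binary: R is the Cartesian product, over a partition of V into
  blocks of at most two variables, of relations on those blocks.\<close>
definition basically_binary :: "'v set \<Rightarrow> ('v \<Rightarrow> bool) set \<Rightarrow> bool" where
  "basically_binary V R \<longleftrightarrow>
     (\<exists>P S. partition_on V P \<and> (\<forall>B\<in>P. card B \<le> 2) \<and>
        (\<forall>B\<in>P. S B \<subseteq> assignments B) \<and>
        R = {x \<in> assignments V. \<forall>B\<in>P. restrict_to x B \<in> S B})"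

end

theory Submission
  imports Defs
begin

definition nonconst :: "('v \<Rightarrow> bool) set \<Rightarrow> 'v \<Rightarrow> bool" where
  "nonconst R i \<longleftrightarrow> (\<exists>u\<in>R. u i) \<and> (\<exists>u\<in>R. \<not> u i)"

definition leR :: "('v \<Rightarrow> bool) set \<Rightarrow> 'v \<Rightarrow> 'v \<Rightarrow> bool" where
  "leR R i j \<longleftrightarrow> (\<forall>w\<in>R. w i \<longrightarrow> w j)"

definition adj :: "('v \<Rightarrow> bool) set \<Rightarrow> 'v \<Rightarrow> 'v \<Rightarrow> bool" where
  "adj R i j \<longleftrightarrow> i \<noteq> j \<and> nonconst R i \<and> nonconst R j \<and> (leR R i j \<or> leR R j i)"

lemma IM_meet:
  assumes "IM_conj V R" "w1 \<in> R" "w2 \<in> R"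
  shows "(\<lambda>v. w1 v \<and> w2 v) \<in> R"
proof -
  from assms(1) obtain Imp Pins where R: "R = {x \<in> assignments V. (\<forall>(i, j)\<in>Imp. x i \<longrightarrow> x j) \<and> (\<forall>(i, c)\<in>Pins. x i = c)}"
    unfolding IM_conj_def by blast
  have "w1 \<in> assignments V" "w2 \<in> assignments V" "\<forall>(i, j)\<in>Imp. w1 i \<longrightarrow> w1 j" "\<forall>(i, j)\<in>Imp. w2 i \<longrightarrow> w2 j"
    "\<forall>(i, c)\<in>Pins. w1 i = c" "\<forall>(i, c)\<in>Pins. w2 i = c"
    using assms(2,3) unfolding R by auto
  then show ?thesis unfolding R assignments_def by auto
qed

lemma IM_join:
  assumes "IM_conj V R" "w1 \<in> R" "w2 \<in> R"
  shows "(\<lambda>v. w1 v \<or> w2 v) \<in> R"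
proof -
  from assms(1) obtain Imp Pins where R: "R = {x \<in> assignments V. (\<forall>(i, j)\<in>Imp. x i \<longrightarrow> x j) \<and> (\<forall>(i, c)\<in>Pins. x i = c)}"
    unfolding IM_conj_def by blast
  have "w1 \<in> assignments V" "w2 \<in> assignments V" "\<forall>(i, j)\<in>Imp. w1 i \<longrightarrow> w1 j" "\<forall>(i, j)\<in>Imp. w2 i \<longrightarrow> w2 j"
    "\<forall>(i, c)\<in>Pins. w1 i = c" "\<forall>(i, c)\<in>Pins. w2 i = c"
    using assms(2,3) unfolding R by auto
  then show ?thesis unfolding R assignments_def by auto
qed

lemma IM_sub: "IM_conj V R \<Longrightarrow> R \<subseteq> assignments V"
  unfolding IM_conj_def by blast

lemma nonconst_V: "IM_conj V R \<Longrightarrow> nonconst R j \<Longrightarrow> j \<in> V"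
  using IM_sub[of V R] unfolding nonconst_def assignments_def by blast

lemma up3:
  assumes IM: "IM_conj V R" and dm: "delta_matroid V R"
    and abc: "a \<in> V" "b \<noteq> c" "b \<noteq> a" "c \<noteq> a"
    and nc: "nonconst R a" "nonconst R b" "nonconst R c"
    and lb: "leR R a b" and lc: "leR R a c"
  shows False
proof -
  obtain wa wb wc where w: "wa \<in> R" "wb \<in> R" "wc \<in> R" "\<not> wa a" "\<not> wb b" "\<not> wc c"
    using nc unfolding nonconst_def by blast
  define m where "m = (\<lambda>v. (\<lambda>v. wa v \<and> wb v) v \<and> wc v)"
  have mR: "m \<in> R" unfolding m_def using IM_meet[OF IM IM_meet[OF IM w(1,2)] w(3)] .
  have m: "\<not> m a" "\<not> m b" "\<not> m c" using w unfolding m_def by auto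
  obtain t where t: "t \<in> R" "t a" using nc unfolding nonconst_def by blast
  obtain l where l: "flip2 m a l \<in> R"
    proof -
    have "m a \<noteq> t a" using m t by simp
    then have "\<exists>j\<in>V. m j \<noteq> t j \<and> flip2 m a j \<in> R"
      using dm mR t(1) abc(1) unfolding delta_matroid_def by simp
    then show ?thesis using that by blast
  qed
  have fa: "flip2 m a l a" using m unfolding flip2_def by simp
  have fb: "flip2 m a l b" using lb l fa unfolding leR_def by blast
  have fc: "flip2 m a l c" using lc l fa unfolding leR_def by blast
  have "b = l" proof (rule ccontr)
    assume "b \<noteq> l" then have "flip2 m a l b = m b" using abc unfolding flip2_def by simp
    then show False using fb m by simp
  qed
  moreover have "c = l" proof (rule ccontr)
    assume "c \<noteq> l" then have "flip2 m a l c = m c" using abc unfolding flip2_def by simp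
    then show False using fc m by simp
  qed
  ultimately show False using abc by simp
qed

lemma down3:
  assumes IM: "IM_conj V R" and dm: "delta_matroid V R"
    and abc: "a \<in> V" "b \<noteq> c" "b \<noteq> a" "c \<noteq> a"
    and nc: "nonconst R a" "nonconst R b" "nonconst R c"
    and lb: "leR R b a" and lc: "leR R c a"
  shows False
proof -
  obtain wa wb wc where w: "wa \<in> R" "wb \<in> R" "wc \<in> R" "wa a" "wb b" "wc c"
    using nc unfolding nonconst_def by blast
  define m where "m = (\<lambda>v. (\<lambda>v. wa v \<or> wb v) v \<or> wc v)"
  have mR: "m \<in> R" unfolding m_def using IM_join[OF IM IM_join[OF IM w(1,2)] w(3)] .
  have m: "m a" "m b" "m c" using w unfolding m_def by auto
  obtain t where t: "t \<in> R" "\<not> t a" using nc unfolding nonconst_def by blast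
  obtain l where l: "flip2 m a l \<in> R"
    proof -
    have "m a \<noteq> t a" using m t by simp
    then have "\<exists>j\<in>V. m j \<noteq> t j \<and> flip2 m a j \<in> R"
      using dm mR t(1) abc(1) unfolding delta_matroid_def by simp
    then show ?thesis using that by blast
  qed
  have fa: "\<not> flip2 m a l a" using m unfolding flip2_def by simp
  have fb: "\<not> flip2 m a l b" using lb l fa unfolding leR_def by blast
  have fc: "\<not> flip2 m a l c" using lc l fa unfolding leR_def by blast
  have "b = l" proof (rule ccontr)
    assume "b \<noteq> l" then have "flip2 m a l b = m b" using abc unfolding flip2_def by simp
    then show False using fb m by simp
  qed
  moreover have "c = l" proof (rule ccontr)
    assume "c \<noteq> l" then have "flip2 m a l c = m c" using abc unfolding flip2_def by simp
    then show False using fc m by simp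
  qed
  ultimately show False using abc by simp
qed

lemma leR_trans: "leR R a b \<Longrightarrow> leR R b c \<Longrightarrow> leR R a c"
  unfolding leR_def by blast

lemma adj_unique:
  assumes IM: "IM_conj V R" and dm: "delta_matroid V R" and iV: "i \<in> V"
    and "adj R i j" "adj R i k"
  shows "j = k"
proof (rule ccontr)
  assume jk: "j \<noteq> k"
  from assms(4,5) have d: "j \<noteq> i" "k \<noteq> i" "nonconst R i" "nonconst R j" "nonconst R k"
    and o1: "leR R i j \<or> leR R j i" and o2: "leR R i k \<or> leR R k i"
    unfolding adj_def by auto
  have V: "j \<in> V" "k \<in> V" using nonconst_V[OF IM] d by auto
  show False using o1 o2
  proof (elim disjE)
    assume "leR R i j" "leR R i k" then show False
      using up3[OF IM dm iV jk d(1) d(2) d(3) d(4) d(5)] by simp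
  next
    assume "leR R j i" "leR R k i" then show False
      using down3[OF IM dm iV jk d(1) d(2) d(3) d(4) d(5)] by simp
  next
    assume a: "leR R i j" "leR R k i"
    have "leR R k j" by (rule leR_trans[OF a(2) a(1)])
    have ne: "i \<noteq> j" "j \<noteq> k" "i \<noteq> k" using d jk by auto
    show False using up3[OF IM dm V(2) ne(1) ne(3) ne(2) d(5) d(3) d(4) a(2) \<open>leR R k j\<close>] .
  next
    assume a: "leR R j i" "leR R i k"
    have "leR R j k" by (rule leR_trans[OF a(1) a(2)])
    have ne: "i \<noteq> k" "i \<noteq> j" "k \<noteq> j" using d jk by auto
    show False using up3[OF IM dm V(1) ne(1) ne(2) ne(3) d(4) d(3) d(5) a(1) \<open>leR R j k\<close>] .
  qed
qed

lemma adj_sym: "adj R i j \<Longrightarrow> adj R j i"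
  unfolding adj_def by blast

theorem mainTheorem14:
  fixes V :: "'v set" and R :: "('v \<Rightarrow> bool) set"
  assumes "finite V"
    and "R \<subseteq> assignments V"
    and "delta_matroid V R"
    and "IM_conj V R"
  shows "basically_binary V R"
proof -
  note IM = assms(4) and dm = assms(3)
  define B where "B i = insert i {j. adj R i j}" for i
  have adjV: "adj R i j \<Longrightarrow> j \<in> V" for i j
    using nonconst_V[OF IM] unfolding adj_def by blast
  have Badj: "B i = {i, j}" if "adj R i j" for i j
  proof -
    have iV: "i \<in> V" using adjV[OF adj_sym[OF that]] .
    have "{k. adj R i k} = {j}" using adj_unique[OF IM dm iV that] that by blast
    then show ?thesis unfolding B_def by simp
  qed
  have Bs: "B i = {i}" if "\<not> (\<exists>j. adj R i j)" for i
    using that unfolding B_def by auto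
  have Bcases: "B i = {i} \<or> (\<exists>j. adj R i j \<and> B i = {i, j})" for i
    using Bs Badj by blast
  define P where "P = B ` V"
  have BV: "B i \<subseteq> V" if "i \<in> V" for i
    using that adjV unfolding B_def by blast
  have iB: "i \<in> B i" for i unfolding B_def by simp
  have same: "B i = B j" if "x \<in> B i" "x \<in> B j" for i j x
  proof -
    have bx: "B i = B x" if "x \<in> B i" for i x
    proof (cases "x = i")
      case False
      have "B i \<noteq> {i}" using that False by auto
      then obtain j where j: "adj R i j" "B i = {i, j}" using Bcases[of i] by auto
      then have "x = j" using that False by auto
      then show ?thesis using j Badj[OF adj_sym[OF j(1)]] by auto
    qed simp
    show ?thesis using bx[OF that(1)] bx[OF that(2)] by simp
  qed
  have part: "partition_on V P"
  proof (rule partition_onI)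
    show "\<Union> P = V" unfolding P_def using BV iB by blast
    show "{} \<notin> P" unfolding P_def using iB by blast
    fix p q assume "p \<in> P" "q \<in> P" "p \<noteq> q"
    then show "disjnt p q" unfolding P_def disjnt_def using same by blast
  qed
  have card: "\<forall>b\<in>P. card b \<le> 2"
  proof
    fix b assume "b \<in> P"
    then obtain i where "b = B i" unfolding P_def by blast
    then show "card b \<le> 2" using Bcases[of i]
      by (auto simp: card_insert_if)
  qed
  define S where "S b = (\<lambda>z. restrict_to z b) ` R" for b
  have Ssub: "\<forall>b\<in>P. S b \<subseteq> assignments b"
    unfolding S_def restrict_to_def assignments_def by force
  from IM obtain Imp Pins where ImpV: "Imp \<subseteq> V \<times> V" and PinsV: "Pins \<subseteq> V \<times> (UNIV :: bool set)"
    and R: "R = {x \<in> assignments V. (\<forall>(i, j)\<in>Imp. x i \<longrightarrow> x j) \<and> (\<forall>(i, c)\<in>Pins. x i = c)}"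
    unfolding IM_conj_def by blast
  have Req: "R = {x \<in> assignments V. \<forall>b\<in>P. restrict_to x b \<in> S b}"
  proof
    show "R \<subseteq> {x \<in> assignments V. \<forall>b\<in>P. restrict_to x b \<in> S b}"
      using assms(2) unfolding S_def by auto
  next
    show "{x \<in> assignments V. \<forall>b\<in>P. restrict_to x b \<in> S b} \<subseteq> R"
    proof
      fix z assume z: "z \<in> {x \<in> assignments V. \<forall>b\<in>P. restrict_to x b \<in> S b}"
      have ag: "\<exists>w\<in>R. \<forall>k\<in>B i. z k = w k" if "i \<in> V" for i
      proof -
        have "B i \<in> P" using that unfolding P_def by blast
        then obtain w where w: "w \<in> R" "restrict_to z (B i) = restrict_to w (B i)"
          using z unfolding S_def by auto
        have "z k = w k" if "k \<in> B i" for k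
          using fun_cong[OF w(2), of k] that unfolding restrict_to_def by simp
        then show ?thesis using w(1) by blast
      qed
      have zi: "\<exists>w\<in>R. z i = w i" if "i \<in> V" for i using ag[OF that] iB by blast
      have imp: "z i \<longrightarrow> z j" if ij: "(i, j) \<in> Imp" for i j
      proof
        assume zi1: "z i"
        have iV: "i \<in> V" and jV: "j \<in> V" using ij ImpV by auto
        obtain w where w: "w \<in> R" "\<forall>k\<in>B i. z k = w k" using ag[OF iV] by blast
        have wi: "w i" using w zi1 iB by auto
        have wj: "w j" using w(1) wi ij unfolding R by auto
        have le: "leR R i j" using ij unfolding R leR_def by auto
        show "z j"
        proof (cases "adj R i j")
          case True
          then have "j \<in> B i" unfolding B_def by simp
          then show ?thesis using w wj by simp
        next
          case False
          obtain w' where w': "w' \<in> R" "z j = w' j" using zi[OF jV] by blast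
          have "i = j \<or> \<not> nonconst R i \<or> \<not> nonconst R j" using False le unfolding adj_def by blast
          then show ?thesis
          proof (elim disjE)
            assume "i = j" then show ?thesis using zi1 by simp
          next
            assume "\<not> nonconst R i"
            then have "\<forall>u\<in>R. u i" using w(1) wi unfolding nonconst_def by blast
            then show ?thesis using w' le unfolding leR_def by auto
          next
            assume "\<not> nonconst R j"
            then have "\<forall>u\<in>R. u j" using w(1) wj unfolding nonconst_def by blast
            then show ?thesis using w' by auto
          qed
        qed
      qed
      have pin: "z i = c" if ic: "(i, c) \<in> Pins" for i c
      proof -
        have "i \<in> V" using ic PinsV by auto
        then obtain w where "w \<in> R" "z i = w i" using zi by blast
        then show ?thesis using ic unfolding R by auto
      qed
      show "z \<in> R" unfolding R using z imp pin by auto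
    qed
  qed
  show ?thesis unfolding basically_binary_def
    using part card Ssub Req by blast
qed

end
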